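(* Let $\mathbf{M}^2$ be a connected smooth oriented surface and $\alpha:\mathbf{M}^2\to\mathbf{R}^4$ a smooth immersion with globally defined orthogonal asymptotic lines. Suppose that $\alpha$ has constant projection with distance of projection $r>0$, i.e. there exists a unit normal vector field $\nu$ along $\alpha$ such that $\langle II(p,v),\nu(p)\rangle = r\, I(p,v)$ for all $p\in\mathbf{M}^2$ and $v\in T_p\mathbf{M}$ (equivalently, for each $p$ the orthogonal projection of the ellipse of curvature $\varepsilon_\alpha(p)$ onto the $\nu(p)$-axis is the single point $r\nu(p)$). Suppose moreover that the Gaussian curvature satisfies $K(p)\neq r^2$ for all $p\in\mathbf{M}^2$. Then $\alpha$ is hyperspherical; more precisely, $\alpha(\mathbf{M}^2)$ is contained in a hypersphere of $\mathbf{R}^4$ of radius $1/r$.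
   Context: For an immersion $\alpha:\mathbf{M}^2\to\mathbf{R}^4$ and a local chart $(u,v)$, $E=\langle\alpha_u,\alpha_u\rangle$, $F=\langle\alpha_u,\alpha_v\rangle$, $G=\langle\alpha_v,\alpha_v\rangle$ and $I=E\,du^2+2F\,du\,dv+G\,dv^2$. For an orthonormal normal frame $\{\nu_1,\nu_2\}$, $e_i=\langle\alpha_{uu},\nu_i\rangle$, $f_i=\langle\alpha_{uv},\nu_i\rangle$, $g_i=\langle\alpha_{vv},\nu_i\rangle$, $II_{\nu_i}=e_i\,du^2+2f_i\,du\,dv+g_i\,dv^2$, and $II=II_{\nu_1}\nu_1+II_{\nu_2}\nu_2$. The Gaussian curvature is $K=\frac{e_1g_1-f_1^2+e_2g_2-f_2^2}{EG-F^2}$. The normal curvature vector is $\eta(p,v)=II(p,v)/I(p,v)$ and the ellipse of curvature $\varepsilon_\alpha(p)$ is the image of the unit tangent circle under $\eta(p,\cdot)$. A point is an inflection point if the ellipse of curvature there is a radial line segment (a segment contained in a line through the origin of $N_p\mathbf{M}$), equivalently $k_N(p)=0$ and $\Delta(p)=0$ where $k_N=\frac{E(f_1g_2-f_2g_1)-F(e_1g_2-e_2g_1)+G(e_1f_2-e_2f_1)}{2(EG-F^2)}$ and $\Delta$ is $\frac{1}{4(EG-F^2)}$ times the resultant determinant of $II_{\nu_1},II_{\nu_2}$. The asymptotic lines are the integral curves of the quadratic differential equation $(e_1f_2-e_2f_1)du^2+(e_1g_2-e_2g_1)du\,dv+(f_1g_2-f_2g_1)dv^2=0$ (equivalently $\mathrm{Jac}(II_{\nu_1},II_{\nu_2})=0$,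 Jacobian with respect to $(du,dv)$); geometrically, they are the directions whose normal curvature vectors are tangent lines from the origin of $N_p\mathbf{M}$ to $\varepsilon_\alpha(p)$; their singularities are the inflection points. "Globally defined orthogonal asymptotic lines" means the two asymptotic directions are defined away from inflection points on all of $\mathbf{M}^2$ and are orthogonal. An immersion is hyperspherical if its image is contained in a hypersphere (round $3$-sphere) of $\mathbf{R}^4$. *)

theory Defs
  imports "HOL-Analysis.Analysis"
begin

fun iter_dderiv :: "('a::real_normed_vector \<Rightarrow> 'b::real_normed_vector) \<Rightarrow> 'a list \<Rightarrow> 'a \<Rightarrow> 'b" where
  "iter_dderiv f [] = f"
| "iter_dderiv f (w # ws) = (\<lambda>x. frechet_derivative (iter_dderiv f ws) (at x) w)"

definition smooth_on :: "'a::real_normed_vector set \<Rightarrow> ('a \<Rightarrow> 'b::real_normed_vector) \<Rightarrow> bool" where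
  "smooth_on S f \<longleftrightarrow> open S \<and> (\<forall>ws. \<forall>x\<in>S. iter_dderiv f ws differentiable (at x))"

definition e_u :: "real^2" where "e_u = axis 1 1"
definition e_v :: "real^2" where "e_v = axis 2 1"

definition Xu :: "(real^2 \<Rightarrow> real^4) \<Rightarrow> real^2 \<Rightarrow> real^4" where
  "Xu X x = frechet_derivative X (at x) e_u"
definition Xv :: "(real^2 \<Rightarrow> real^4) \<Rightarrow> real^2 \<Rightarrow> real^4" where
  "Xv X x = frechet_derivative X (at x) e_v"
definition Xuu :: "(real^2 \<Rightarrow> real^4) \<Rightarrow> real^2 \<Rightarrow> real^4" where
  "Xuu X x = frechet_derivative (Xu X) (at x) e_u"
definition Xuv :: "(real^2 \<Rightarrow> real^4) \<Rightarrow> real^2 \<Rightarrow> real^4" where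
  "Xuv X x = frechet_derivative (Xu X) (at x) e_v"
definition Xvv :: "(real^2 \<Rightarrow> real^4) \<Rightarrow> real^2 \<Rightarrow> real^4" where
  "Xvv X x = frechet_derivative (Xv X) (at x) e_v"

definition EE :: "(real^2 \<Rightarrow> real^4) \<Rightarrow> real^2 \<Rightarrow> real" where "EE X x = Xu X x \<bullet> Xu X x"
definition FF :: "(real^2 \<Rightarrow> real^4) \<Rightarrow> real^2 \<Rightarrow> real" where "FF X x = Xu X x \<bullet> Xv X x"
definition GG :: "(real^2 \<Rightarrow> real^4) \<Rightarrow> real^2 \<Rightarrow> real" where "GG X x = Xv X x \<bullet> Xv X x"

definition first_ff :: "(real^2 \<Rightarrow> real^4) \<Rightarrow> real^2 \<Rightarrow> real \<Rightarrow> real \<Rightarrow> real" where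
  "first_ff X x du dv = EE X x * du^2 + 2 * FF X x * du * dv + GG X x * dv^2"

definition I_orth :: "(real^2 \<Rightarrow> real^4) \<Rightarrow> real^2 \<Rightarrow> real \<times> real \<Rightarrow> real \<times> real \<Rightarrow> bool" where
  "I_orth X x w1 w2 \<longleftrightarrow>
     EE X x * fst w1 * fst w2 + FF X x * (fst w1 * snd w2 + snd w1 * fst w2) + GG X x * snd w1 * snd w2 = 0"

definition ee :: "(real^2 \<Rightarrow> real^4) \<Rightarrow> real^4 \<Rightarrow> real^2 \<Rightarrow> real" where "ee X n x = Xuu X x \<bullet> n"
definition ff :: "(real^2 \<Rightarrow> real^4) \<Rightarrow> real^4 \<Rightarrow> real^2 \<Rightarrow> real" where "ff X n x = Xuv X x \<bullet> n"
definition gg :: "(real^2 \<Rightarrow> real^4) \<Rightarrow> real^4 \<Rightarrow> real^2 \<Rightarrow> real" where "gg X n x = Xvv X x \<bullet> n"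

text \<open>II_n = e du^2 + 2 f du dv + g dv^2, i.e. the component of II along the normal vector n.\<close>
definition second_ff :: "(real^2 \<Rightarrow> real^4) \<Rightarrow> real^4 \<Rightarrow> real^2 \<Rightarrow> real \<Rightarrow> real \<Rightarrow> real" where
  "second_ff X n x du dv = ee X n x * du^2 + 2 * ff X n x * du * dv + gg X n x * dv^2"

definition normal_frame :: "(real^2 \<Rightarrow> real^4) \<Rightarrow> real^2 \<Rightarrow> real^4 \<Rightarrow> real^4 \<Rightarrow> bool" where
  "normal_frame X x n1 n2 \<longleftrightarrow> norm n1 = 1 \<and> norm n2 = 1 \<and> n1 \<bullet> n2 = 0 \<and>
     n1 \<bullet> Xu X x = 0 \<and> n1 \<bullet> Xv X x = 0 \<and> n2 \<bullet> Xu X x = 0 \<and> n2 \<bullet> Xv X x = 0"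

definition gauss_curv :: "(real^2 \<Rightarrow> real^4) \<Rightarrow> real^4 \<Rightarrow> real^4 \<Rightarrow> real^2 \<Rightarrow> real" where
  "gauss_curv X n1 n2 x =
     (ee X n1 x * gg X n1 x - (ff X n1 x)^2 + ee X n2 x * gg X n2 x - (ff X n2 x)^2)
     / (EE X x * GG X x - (FF X x)^2)"

definition normal_curv :: "(real^2 \<Rightarrow> real^4) \<Rightarrow> real^4 \<Rightarrow> real^4 \<Rightarrow> real^2 \<Rightarrow> real" where
  "normal_curv X n1 n2 x =
     (let e1 = ee X n1 x; f1 = ff X n1 x; g1 = gg X n1 x;
          e2 = ee X n2 x; f2 = ff X n2 x; g2 = gg X n2 x in
      (EE X x * (f1 * g2 - f2 * g1) - FF X x * (e1 * g2 - e2 * g1) + GG X x * (e1 * f2 - e2 * f1))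
      / (2 * (EE X x * GG X x - (FF X x)^2)))"

text \<open>Delta = resultant determinant of II_n1, II_n2 divided by 4(EG-F^2).\<close>
definition Delta :: "(real^2 \<Rightarrow> real^4) \<Rightarrow> real^4 \<Rightarrow> real^4 \<Rightarrow> real^2 \<Rightarrow> real" where
  "Delta X n1 n2 x =
     (let e1 = ee X n1 x; f1 = ff X n1 x; g1 = gg X n1 x;
          e2 = ee X n2 x; f2 = ff X n2 x; g2 = gg X n2 x in
      det (vector [vector [e1, 2*f1, g1, 0], vector [0, e1, 2*f1, g1],
                   vector [e2, 2*f2, g2, 0], vector [0, e2, 2*f2, g2]] :: real^4^4)
      / (4 * (EE X x * GG X x - (FF X x)^2)))"

definition inflection :: "(real^2 \<Rightarrow> real^4) \<Rightarrow> real^4 \<Rightarrow> real^4 \<Rightarrow> real^2 \<Rightarrow> bool" where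
  "inflection X n1 n2 x \<longleftrightarrow> normal_curv X n1 n2 x = 0 \<and> Delta X n1 n2 x = 0"

definition asym_form :: "(real^2 \<Rightarrow> real^4) \<Rightarrow> real^4 \<Rightarrow> real^4 \<Rightarrow> real^2 \<Rightarrow> real \<Rightarrow> real \<Rightarrow> real" where
  "asym_form X n1 n2 x du dv =
     (let e1 = ee X n1 x; f1 = ff X n1 x; g1 = gg X n1 x;
          e2 = ee X n2 x; f2 = ff X n2 x; g2 = gg X n2 x in
      (e1 * f2 - e2 * f1) * du^2 + (e1 * g2 - e2 * g1) * du * dv + (f1 * g2 - f2 * g1) * dv^2)"

definition orth_asymptotic_at :: "(real^2 \<Rightarrow> real^4) \<Rightarrow> real^4 \<Rightarrow> real^4 \<Rightarrow> real^2 \<Rightarrow> bool" where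
  "orth_asymptotic_at X n1 n2 x \<longleftrightarrow>
     (\<exists>w1 w2. w1 \<noteq> (0,0) \<and> w2 \<noteq> (0,0) \<and> I_orth X x w1 w2 \<and>
        {w. w \<noteq> (0,0) \<and> asym_form X n1 n2 x (fst w) (snd w) = 0} =
        {w. w \<noteq> (0,0) \<and> (\<exists>c::real. w = (c * fst w1, c * snd w1) \<or> w = (c * fst w2, c * snd w2))})"

text \<open>A chart is a pair (U, psi) with psi a homeomorphism of the open set U onto an open set of R^2.
  The local parametrization is the inverse chart map.\<close>
definition param :: "'m set \<times> ('m \<Rightarrow> real^2) \<Rightarrow> real^2 \<Rightarrow> 'm" where
  "param c = inv_into (fst c) (snd c)"

definition cdom :: "'m set \<times> ('m \<Rightarrow> real^2) \<Rightarrow> (real^2) set" where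
  "cdom c = snd c ` fst c"

definition oriented_smooth_atlas :: "('m::topological_space set \<times> ('m \<Rightarrow> real^2)) set \<Rightarrow> bool" where
  "oriented_smooth_atlas A \<longleftrightarrow>
     (\<Union>c\<in>A. fst c) = UNIV \<and>
     (\<forall>c\<in>A. open (fst c) \<and> open (cdom c) \<and>
        homeomorphism (fst c) (cdom c) (snd c) (param c)) \<and>
     (\<forall>c1\<in>A. \<forall>c2\<in>A.
        smooth_on (snd c1 ` (fst c1 \<inter> fst c2)) (snd c2 \<circ> param c1) \<and>
        (\<forall>x \<in> snd c1 ` (fst c1 \<inter> fst c2).
           det (matrix (frechet_derivative (snd c2 \<circ> param c1) (at x))) > 0))"

definition smooth_immersion :: "('m set \<times> ('m \<Rightarrow> real^2)) set \<Rightarrow> ('m \<Rightarrow> real^4) \<Rightarrow> bool" where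
  "smooth_immersion A \<alpha> \<longleftrightarrow>
     (\<forall>c\<in>A. smooth_on (cdom c) (\<alpha> \<circ> param c) \<and>
        (\<forall>x\<in>cdom c. inj (frechet_derivative (\<alpha> \<circ> param c) (at x))))"

definition orth_asymptotic_lines :: "('m set \<times> ('m \<Rightarrow> real^2)) set \<Rightarrow> ('m \<Rightarrow> real^4) \<Rightarrow> bool" where
  "orth_asymptotic_lines A \<alpha> \<longleftrightarrow>
     (\<forall>c\<in>A. \<forall>x\<in>cdom c. \<forall>n1 n2. normal_frame (\<alpha> \<circ> param c) x n1 n2 \<longrightarrow>
        \<not> inflection (\<alpha> \<circ> param c) n1 n2 x \<longrightarrow> orth_asymptotic_at (\<alpha> \<circ> param c) n1 n2 x)"

definition unit_normal_field :: "('m set \<times> ('m \<Rightarrow> real^2)) set \<Rightarrow> ('m \<Rightarrow> real^4) \<Rightarrow> ('m \<Rightarrow> real^4) \<Rightarrow> bool" where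
  "unit_normal_field A \<alpha> \<nu> \<longleftrightarrow>
     (\<forall>p. norm (\<nu> p) = 1) \<and>
     (\<forall>c\<in>A. smooth_on (cdom c) (\<nu> \<circ> param c) \<and>
        (\<forall>x\<in>cdom c. \<nu> (param c x) \<bullet> Xu (\<alpha> \<circ> param c) x = 0 \<and>
                     \<nu> (param c x) \<bullet> Xv (\<alpha> \<circ> param c) x = 0))"

definition constant_projection :: "('m set \<times> ('m \<Rightarrow> real^2)) set \<Rightarrow> ('m \<Rightarrow> real^4) \<Rightarrow> ('m \<Rightarrow> real^4) \<Rightarrow> real \<Rightarrow> bool" where
  "constant_projection A \<alpha> \<nu> r \<longleftrightarrow>
     (\<forall>c\<in>A. \<forall>x\<in>cdom c. \<forall>du dv.
        second_ff (\<alpha> \<circ> param c) (\<nu> (param c x)) x du dv = r * first_ff (\<alpha> \<circ> param c) x du dv)"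

end

theory Submission
  imports Defs
begin

definition pd :: "(real^2 \<Rightarrow> 'b::real_normed_vector) \<Rightarrow> real^2 \<Rightarrow> real^2 \<Rightarrow> 'b" where
  "pd f w y = frechet_derivative f (at y) w"

lemma pd_X1: "Xu X = pd X e_u" "Xv X = pd X e_v"
  by (auto simp: fun_eq_iff pd_def Xu_def Xv_def)

lemma pd_X2: "Xuu X = pd (pd X e_u) e_u"
  "Xuv X = pd (pd X e_u) e_v" "Xvv X = pd (pd X e_v) e_v"
  by (auto simp: fun_eq_iff Xuu_def Xuv_def Xvv_def pd_X1 pd_def[of "pd X _"])

lemmas pd_X = pd_X1 pd_X2

lemma smooth_D:
  assumes "smooth_on U f" "y \<in> U"
  shows "f differentiable (at y)" "pd f w differentiable (at y)"
    "pd (pd f w1) w2 differentiable (at y)" "open U"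
proof -
  have "iter_dderiv f [] differentiable (at y)" "iter_dderiv f [w] differentiable (at y)"
    "iter_dderiv f [w2, w1] differentiable (at y)"
    using assms unfolding smooth_on_def by blast+
  then show "f differentiable (at y)" "pd f w differentiable (at y)"
    "pd (pd f w1) w2 differentiable (at y)"
    by (simp_all add: pd_def[abs_def])
  show "open U" using assms smooth_on_def by blast
qed

lemma pd_has:
  assumes "f differentiable (at y)"
  shows "(f has_derivative (\<lambda>h. pd f h y)) (at y)"
  using assms frechet_derivative_works unfolding pd_def by blast

lemma pd_linear:
  assumes "f differentiable (at y)"
  shows "linear (\<lambda>h. pd f h y)"
  using pd_has[OF assms] has_derivative_linear by blast

lemma line_has_deriv:
  fixes f :: "real^2 \<Rightarrow> real^4"
  assumes "f differentiable (at (a + t *\<^sub>R w))"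
  shows "((\<lambda>s. f (a + s *\<^sub>R w) \<bullet> k) has_real_derivative (pd f w (a + t *\<^sub>R w) \<bullet> k)) (at t)"
proof -
  have f: "(f has_derivative (\<lambda>h. pd f h (a + t *\<^sub>R w))) (at (a + t *\<^sub>R w))"
    using pd_has[OF assms] .
  have g: "((\<lambda>s. a + s *\<^sub>R w) has_derivative (\<lambda>s. s *\<^sub>R w)) (at t)"
    by (auto intro!: derivative_eq_intros)
  have "((f \<circ> (\<lambda>s. a + s *\<^sub>R w)) has_derivative ((\<lambda>h. pd f h (a + t *\<^sub>R w)) \<circ> (\<lambda>s. s *\<^sub>R w))) (at t)"
    using diff_chain_at[OF g, of f "\<lambda>h. pd f h (a + t *\<^sub>R w)"] f by simp
  then have "((\<lambda>s. (f \<circ> (\<lambda>s. a + s *\<^sub>R w)) s \<bullet> k) has_derivative (\<lambda>s. ((\<lambda>h. pd f h (a + t *\<^sub>R w)) \<circ> (\<lambda>s. s *\<^sub>R w)) s \<bullet> k)) (at t)"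
    by (rule has_derivative_inner_left)
  moreover have "(\<lambda>s. ((\<lambda>h. pd f h (a + t *\<^sub>R w)) \<circ> (\<lambda>s. s *\<^sub>R w)) s \<bullet> k) = (*) (pd f w (a + t *\<^sub>R w) \<bullet> k)"
    using linear_scale[OF pd_linear[OF assms]] by (auto simp: fun_eq_iff)
  ultimately show ?thesis by (simp add: has_field_derivative_def o_def)
qed

lemma mvt_line:
  fixes f :: "real^2 \<Rightarrow> real^4"
  assumes "h > 0" "\<And>s. 0 \<le> s \<Longrightarrow> s \<le> h \<Longrightarrow> f differentiable (at (a + s *\<^sub>R w))"
  shows "\<exists>s. 0 < s \<and> s < h \<and> (f (a + h *\<^sub>R w) - f a) \<bullet> k = h * (pd f w (a + s *\<^sub>R w) \<bullet> k)"
proof -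
  let ?g = "\<lambda>s. f (a + s *\<^sub>R w) \<bullet> k"
  have D: "\<And>s. 0 \<le> s \<Longrightarrow> s \<le> h \<Longrightarrow> (?g has_real_derivative (pd f w (a + s *\<^sub>R w) \<bullet> k)) (at s)"
    by (rule line_has_deriv, rule assms(2))
  have C: "continuous_on {0..h} ?g"
  proof (rule continuous_at_imp_continuous_on, rule ballI)
    fix s assume "s \<in> {0..h}"
    then show "isCont ?g s" using D[of s] by (auto intro: DERIV_isCont)
  qed
  have "\<exists>l z. 0 < z \<and> z < h \<and> DERIV ?g z :> l \<and> ?g h - ?g 0 = (h - 0) * l"
  proof (rule MVT[OF assms(1) C])
    fix s assume "0 < s" "s < h"
    then show "?g differentiable (at s)" using D[of s] real_differentiable_def by auto
  qed
  then obtain l z where z: "0 < z" "z < h" "DERIV ?g z :> l" "?g h - ?g 0 = (h - 0) * l"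
    by blast
  have "l = pd f w (a + z *\<^sub>R w) \<bullet> k" using DERIV_unique[OF z(3) D[of z]] z by simp
  then have "(f (a + h *\<^sub>R w) - f a) \<bullet> k = h * (pd f w (a + z *\<^sub>R w) \<bullet> k)"
    using z(4) by (simp add: inner_diff_left)
  then show ?thesis using z(1,2) by blast
qed

lemma mvt_line_diff:
  fixes f :: "real^2 \<Rightarrow> real^4"
  assumes "h > 0" "\<And>s. 0 \<le> s \<Longrightarrow> s \<le> h \<Longrightarrow> f differentiable (at (a + s *\<^sub>R w))"
    "\<And>s. 0 \<le> s \<Longrightarrow> s \<le> h \<Longrightarrow> f differentiable (at (b + s *\<^sub>R w))"
  shows "\<exists>s. 0 < s \<and> s < h \<and> (f (a + h *\<^sub>R w) - f (b + h *\<^sub>R w) - f a + f b) \<bullet> k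
     = h * ((pd f w (a + s *\<^sub>R w) - pd f w (b + s *\<^sub>R w)) \<bullet> k)"
proof -
  let ?g = "\<lambda>s. f (a + s *\<^sub>R w) \<bullet> k - f (b + s *\<^sub>R w) \<bullet> k"
  have D: "\<And>s. 0 \<le> s \<Longrightarrow> s \<le> h \<Longrightarrow> (?g has_real_derivative (pd f w (a + s *\<^sub>R w) \<bullet> k - pd f w (b + s *\<^sub>R w) \<bullet> k)) (at s)"
    by (rule DERIV_diff; rule line_has_deriv; simp add: assms(2,3))
  have C: "continuous_on {0..h} ?g"
  proof (rule continuous_at_imp_continuous_on, rule ballI)
    fix s assume "s \<in> {0..h}"
    then show "isCont ?g s" using D[of s] by (auto intro: DERIV_isCont)
  qed
  have "\<exists>l z. 0 < z \<and> z < h \<and> DERIV ?g z :> l \<and> ?g h - ?g 0 = (h - 0) * l"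
  proof (rule MVT[OF assms(1) C])
    fix s assume "0 < s" "s < h"
    then show "?g differentiable (at s)" using D[of s] real_differentiable_def by auto
  qed
  then obtain l z where z: "0 < z" "z < h" "DERIV ?g z :> l" "?g h - ?g 0 = (h - 0) * l"
    by blast
  have "l = pd f w (a + z *\<^sub>R w) \<bullet> k - pd f w (b + z *\<^sub>R w) \<bullet> k" using DERIV_unique[OF z(3) D[of z]] z by simp
  then have "(f (a + h *\<^sub>R w) - f (b + h *\<^sub>R w) - f a + f b) \<bullet> k
     = h * ((pd f w (a + z *\<^sub>R w) - pd f w (b + z *\<^sub>R w)) \<bullet> k)"
    using z(4) by (simp add: inner_diff_left inner_add_left)
  then show ?thesis using z(1,2) by blast
qed

lemma dist_P:
  fixes x :: "real^2"
  shows "dist (x + s *\<^sub>R e_u + t *\<^sub>R e_v) x \<le> \<bar>s\<bar> + \<bar>t\<bar>"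
proof -
  have "dist (x + s *\<^sub>R e_u + t *\<^sub>R e_v) x = norm (s *\<^sub>R e_u + t *\<^sub>R e_v)"
    by (simp add: dist_norm)
  also have "\<dots> \<le> norm (s *\<^sub>R e_u) + norm (t *\<^sub>R e_v)" by (rule norm_triangle_ineq)
  also have "\<dots> = \<bar>s\<bar> + \<bar>t\<bar>" by (simp add: e_u_def e_v_def)
  finally show ?thesis .
qed

lemma schwarz:
  fixes f :: "real^2 \<Rightarrow> real^4"
  assumes sm: "smooth_on U f" and xU: "x \<in> U"
  shows "pd (pd f e_u) e_v x = pd (pd f e_v) e_u x"
proof -
  have "open U" using smooth_D[OF sm xU] by blast
  then obtain \<delta> where d0: "\<delta> > 0" and dU: "ball x \<delta> \<subseteq> U"
    using xU open_contains_ball by blast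
  define P where "P s t = x + s *\<^sub>R e_u + t *\<^sub>R e_v" for s t
  define G1 where "G1 = pd (pd f e_u) e_v"
  define G2 where "G2 = pd (pd f e_v) e_u"
  have PU: "P s t \<in> U" if "\<bar>s\<bar> \<le> h" "\<bar>t\<bar> \<le> h" "2 * h < \<delta>" for s t h
  proof -
    have "dist (P s t) x < \<delta>" using dist_P[of x s t] that unfolding P_def by linarith
    then show ?thesis using dU by (auto simp: dist_commute)
  qed
  have key: "\<exists>p1 p2. dist p1 x \<le> 2 * h \<and> dist p2 x \<le> 2 * h \<and> G1 p1 \<bullet> k = G2 p2 \<bullet> k"
    if h0: "0 < h" and hd: "2 * h < \<delta>" for h k
  proof -
    have Df: "f differentiable (at (P s t))" "pd f e_u differentiable (at (P s t))"
      "pd f e_v differentiable (at (P s t))"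
      if "0 \<le> s" "s \<le> h" "0 \<le> t" "t \<le> h" for s t
      using smooth_D[OF sm PU[of s h t]] that hd by auto
    define \<Delta> where "\<Delta> = f (P h h) - f (P h 0) - f (P 0 h) + f (P 0 0)"
    have e1: "x + h *\<^sub>R e_v + s *\<^sub>R e_u = P s h" "x + s *\<^sub>R e_u = P s 0"
      "x + h *\<^sub>R e_u + s *\<^sub>R e_v = P h s" "x + s *\<^sub>R e_v = P 0 s" "P 0 t + s *\<^sub>R e_u = P s t" "P t 0 + s *\<^sub>R e_v = P t s" for s t
      by (auto simp: P_def algebra_simps)
    obtain s1 where s1: "0 < s1" "s1 < h" "(f (P h h) - f (P h 0) - f (P 0 h) + f x) \<bullet> k
       = h * ((pd f e_u (P s1 h) - pd f e_u (P s1 0)) \<bullet> k)"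
      proof -
      have "\<exists>s. 0 < s \<and> s < h \<and> (f (x + h *\<^sub>R e_v + h *\<^sub>R e_u) - f (x + h *\<^sub>R e_u) - f (x + h *\<^sub>R e_v) + f x) \<bullet> k
          = h * ((pd f e_u (x + h *\<^sub>R e_v + s *\<^sub>R e_u) - pd f e_u (x + s *\<^sub>R e_u)) \<bullet> k)"
      proof (rule mvt_line_diff[OF h0])
        fix s assume "0 \<le> s" "s \<le> h"
        then show "f differentiable (at (x + h *\<^sub>R e_v + s *\<^sub>R e_u))" "f differentiable (at (x + s *\<^sub>R e_u))"
          using Df(1)[of s h] Df(1)[of s 0] h0 unfolding e1 by auto
      qed
      then show ?thesis using that unfolding e1 by blast
    qed
    have e2: "P s1 0 + t *\<^sub>R e_v = P s1 t" for t by (simp add: P_def)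
    obtain t1 where t1: "0 < t1" "t1 < h" "(pd f e_u (P s1 h) - pd f e_u (P s1 0)) \<bullet> k
       = h * (G1 (P s1 t1) \<bullet> k)"
    proof -
      have "\<exists>t. 0 < t \<and> t < h \<and> (pd f e_u (P s1 0 + h *\<^sub>R e_v) - pd f e_u (P s1 0)) \<bullet> k
          = h * (pd (pd f e_u) e_v (P s1 0 + t *\<^sub>R e_v) \<bullet> k)"
      proof (rule mvt_line[OF h0])
        fix t assume "0 \<le> t" "t \<le> h"
        then show "pd f e_u differentiable (at (P s1 0 + t *\<^sub>R e_v))"
          using Df(2)[of s1 t] s1 unfolding e2 by auto
      qed
      then show ?thesis using that unfolding e2 G1_def by blast
    qed
    obtain s2 where s2: "0 < s2" "s2 < h" "(f (P h h) - f (P 0 h) - f (P h 0) + f x) \<bullet> k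
       = h * ((pd f e_v (P h s2) - pd f e_v (P 0 s2)) \<bullet> k)"
      proof -
      have "\<exists>s. 0 < s \<and> s < h \<and> (f (x + h *\<^sub>R e_u + h *\<^sub>R e_v) - f (x + h *\<^sub>R e_v) - f (x + h *\<^sub>R e_u) + f x) \<bullet> k
          = h * ((pd f e_v (x + h *\<^sub>R e_u + s *\<^sub>R e_v) - pd f e_v (x + s *\<^sub>R e_v)) \<bullet> k)"
      proof (rule mvt_line_diff[OF h0])
        fix s assume "0 \<le> s" "s \<le> h"
        then show "f differentiable (at (x + h *\<^sub>R e_u + s *\<^sub>R e_v))" "f differentiable (at (x + s *\<^sub>R e_v))"
          using Df(1)[of h s] Df(1)[of 0 s] h0 unfolding e1 by auto
      qed
      then show ?thesis using that unfolding e1 by blast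
    qed
    have e3: "P 0 s2 + t *\<^sub>R e_u = P t s2" for t by (simp add: P_def algebra_simps)
    obtain t2 where t2: "0 < t2" "t2 < h" "(pd f e_v (P h s2) - pd f e_v (P 0 s2)) \<bullet> k
       = h * (G2 (P t2 s2) \<bullet> k)"
    proof -
      have "\<exists>t. 0 < t \<and> t < h \<and> (pd f e_v (P 0 s2 + h *\<^sub>R e_u) - pd f e_v (P 0 s2)) \<bullet> k
          = h * (pd (pd f e_v) e_u (P 0 s2 + t *\<^sub>R e_u) \<bullet> k)"
      proof (rule mvt_line[OF h0])
        fix t assume "0 \<le> t" "t \<le> h"
        then show "pd f e_v differentiable (at (P 0 s2 + t *\<^sub>R e_u))"
          using Df(3)[of t s2] s2 unfolding e3 by auto
      qed
      then show ?thesis using that unfolding e3 G2_def by blast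
    qed
    have deq: "f (P h h) - f (P h 0) - f (P 0 h) + f x = f (P h h) - f (P 0 h) - f (P h 0) + f x"
      by (simp add: algebra_simps)
    have q1: "(f (P h h) - f (P h 0) - f (P 0 h) + f x) \<bullet> k = h * (h * (G1 (P s1 t1) \<bullet> k))"
      using s1(3) t1(3) by simp
    have q2: "(f (P h h) - f (P h 0) - f (P 0 h) + f x) \<bullet> k = h * (h * (G2 (P t2 s2) \<bullet> k))"
      unfolding deq using s2(3) t2(3) by simp
    have "h * (h * (G1 (P s1 t1) \<bullet> k)) = h * (h * (G2 (P t2 s2) \<bullet> k))"
      using q1 q2 by (rule trans[OF sym])
    then have "G1 (P s1 t1) \<bullet> k = G2 (P t2 s2) \<bullet> k" using h0 by simp
    moreover have "dist (P s1 t1) x \<le> 2 * h" "dist (P t2 s2) x \<le> 2 * h"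
      using dist_P[of x s1 t1] dist_P[of x t2 s2] s1 t1 s2 t2 unfolding P_def by auto
    ultimately show ?thesis by blast
  qed
  have c1: "isCont G1 x" "isCont G2 x"
    unfolding G1_def G2_def
    by (rule differentiable_imp_continuous_within, rule smooth_D(3)[OF sm xU])+
  have eqk: "G1 x \<bullet> k = G2 x \<bullet> k" for k
  proof -
    have H: "\<bar>G1 x \<bullet> k - G2 x \<bullet> k\<bar> < 2 * e" if e0: "e > 0" for e
    proof -
      have ck: "isCont (\<lambda>y. G1 y \<bullet> k) x" "isCont (\<lambda>y. G2 y \<bullet> k) x"
        using c1 by (auto intro!: continuous_intros)
      obtain d1 where d1: "d1 > 0" "\<And>y. dist y x < d1 \<Longrightarrow> dist (G1 y \<bullet> k) (G1 x \<bullet> k) < e"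
        using ck(1) e0 unfolding continuous_at_eps_delta by blast
      obtain d2 where d2: "d2 > 0" "\<And>y. dist y x < d2 \<Longrightarrow> dist (G2 y \<bullet> k) (G2 x \<bullet> k) < e"
        using ck(2) e0 unfolding continuous_at_eps_delta by blast
      define h where "h = min \<delta> (min d1 d2) / 3"
      have h0: "h > 0" "2 * h < \<delta>" "2 * h < d1" "2 * h < d2"
        using d0 d1 d2 by (auto simp: h_def)
      obtain p1 p2 where p: "dist p1 x \<le> 2 * h" "dist p2 x \<le> 2 * h" "G1 p1 \<bullet> k = G2 p2 \<bullet> k"
        using key[OF h0(1,2)] by blast
      have "dist (G1 p1 \<bullet> k) (G1 x \<bullet> k) < e" "dist (G2 p2 \<bullet> k) (G2 x \<bullet> k) < e"
        using d1(2)[of p1] d2(2)[of p2] p h0 by auto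
      then show ?thesis using p(3) by (auto simp: dist_real_def)
    qed
    show ?thesis
    proof (rule ccontr)
      assume "G1 x \<bullet> k \<noteq> G2 x \<bullet> k"
      then have "\<bar>G1 x \<bullet> k - G2 x \<bullet> k\<bar> / 2 > 0" by simp
      from H[OF this] show False by simp
    qed
  qed
  have "(G1 x - G2 x) \<bullet> (G1 x - G2 x) = 0" using eqk[of "G1 x - G2 x"] by (simp only: inner_diff_left)
  then have "G1 x = G2 x" by simp
  then show ?thesis unfolding G1_def G2_def .
qed

lemma zero_pd:
  assumes "open U" "y \<in> U" "\<And>z. z \<in> U \<Longrightarrow> F z = c"
  shows "pd F w y = 0"
proof -
  have "((\<lambda>z. c) has_derivative (\<lambda>h. 0)) (at y)" by simp
  then have "(F has_derivative (\<lambda>h. 0)) (at y)"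
    by (rule has_derivative_transform_within_open[OF _ assms(1,2)]) (simp add: assms(3))
  then have "frechet_derivative F (at y) = (\<lambda>h. 0)" by (rule frechet_derivative_at[symmetric])
  then show ?thesis unfolding pd_def by simp
qed

lemma pd_inner:
  fixes A B :: "real^2 \<Rightarrow> real^4"
  assumes "A differentiable (at y)" "B differentiable (at y)"
  shows "pd (\<lambda>z. A z \<bullet> B z) w y = pd A w y \<bullet> B y + A y \<bullet> pd B w y"
proof -
  have "((\<lambda>z. A z \<bullet> B z) has_derivative (\<lambda>h. A y \<bullet> pd B h y + pd A h y \<bullet> B y)) (at y)"
    by (rule has_derivative_inner[OF pd_has[OF assms(1)] pd_has[OF assms(2)]])
  then have e: "frechet_derivative (\<lambda>z. A z \<bullet> B z) (at y) = (\<lambda>h. A y \<bullet> pd B h y + pd A h y \<bullet> B y)"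
    by (rule frechet_derivative_at[symmetric])
  show ?thesis unfolding pd_def[of "\<lambda>z. A z \<bullet> B z"] e by (simp add: add.commute)
qed

lemma pd_add_scale:
  fixes A B :: "real^2 \<Rightarrow> real^4"
  assumes "A differentiable (at y)" "B differentiable (at y)"
  shows "pd (\<lambda>z. A z + c *\<^sub>R B z) w y = pd A w y + c *\<^sub>R pd B w y"
    "(\<lambda>z. A z + c *\<^sub>R B z) differentiable (at y)"
proof -
  have d: "((\<lambda>z. A z + c *\<^sub>R B z) has_derivative (\<lambda>h. pd A h y + c *\<^sub>R pd B h y)) (at y)"
    by (intro has_derivative_add has_derivative_scaleR_right pd_has assms)
  then have e: "frechet_derivative (\<lambda>z. A z + c *\<^sub>R B z) (at y) = (\<lambda>h. pd A h y + c *\<^sub>R pd B h y)"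
    by (rule frechet_derivative_at[symmetric])
  show "pd (\<lambda>z. A z + c *\<^sub>R B z) w y = pd A w y + c *\<^sub>R pd B w y"
    unfolding pd_def[of "\<lambda>z. A z + c *\<^sub>R B z"] e by simp
  show "(\<lambda>z. A z + c *\<^sub>R B z) differentiable (at y)" using d differentiable_def by blast
qed

lemma neq_of_orth: "(a::real^4) \<bullet> b = 0 \<Longrightarrow> a \<noteq> 0 \<Longrightarrow> a \<noteq> b"
  by auto

lemma no_five:
  fixes u1 u2 u3 u4 u5 :: "real^4"
  assumes nz: "u1 \<noteq> 0" "u2 \<noteq> 0" "u3 \<noteq> 0" "u4 \<noteq> 0" "u5 \<noteq> 0"
    and o: "u1 \<bullet> u2 = 0" "u1 \<bullet> u3 = 0" "u1 \<bullet> u4 = 0" "u1 \<bullet> u5 = 0"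
      "u2 \<bullet> u3 = 0" "u2 \<bullet> u4 = 0" "u2 \<bullet> u5 = 0"
      "u3 \<bullet> u4 = 0" "u3 \<bullet> u5 = 0" "u4 \<bullet> u5 = 0"
  shows False
proof -
  have o': "u2 \<bullet> u1 = 0" "u3 \<bullet> u1 = 0" "u4 \<bullet> u1 = 0" "u5 \<bullet> u1 = 0"
      "u3 \<bullet> u2 = 0" "u4 \<bullet> u2 = 0" "u5 \<bullet> u2 = 0"
      "u4 \<bullet> u3 = 0" "u5 \<bullet> u3 = 0" "u5 \<bullet> u4 = 0"
    using o by (simp_all add: inner_commute)
  have sq: "u1 \<bullet> u1 \<noteq> 0" "u2 \<bullet> u2 \<noteq> 0" "u3 \<bullet> u3 \<noteq> 0" "u4 \<bullet> u4 \<noteq> 0" "u5 \<bullet> u5 \<noteq> 0"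
    using nz by simp_all
  have ne: "u1 \<noteq> u2" "u1 \<noteq> u3" "u1 \<noteq> u4" "u1 \<noteq> u5" "u2 \<noteq> u3" "u2 \<noteq> u4" "u2 \<noteq> u5"
    "u3 \<noteq> u4" "u3 \<noteq> u5" "u4 \<noteq> u5"
    by (rule neq_of_orth, fact, fact)+
  define S where "S = {u1, u2, u3, u4, u5}"
  have "pairwise orthogonal S"
    unfolding S_def by (auto simp: pairwise_insert orthogonal_def o o')
  moreover have "0 \<notin> S" unfolding S_def using nz by auto
  ultimately have "independent S" by (rule pairwise_orthogonal_independent)
  then have "card S \<le> DIM(real^4)" using independent_bound by blast
  moreover have "card S = 5" unfolding S_def using ne by simp
  ultimately show False by simp
qed

lemma alg:
  fixes xu xv n w z a b c :: "real^4" and r :: real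
  assumes eg: "(xu \<bullet> xu) * (xv \<bullet> xv) - (xu \<bullet> xv)^2 \<noteq> 0"
    and n1: "n \<bullet> n = 1" and nxu: "n \<bullet> xu = 0" and nxv: "n \<bullet> xv = 0"
    and wo: "w \<bullet> xu = 0" "w \<bullet> xv = 0" "w \<bullet> n = 0"
    and zo: "z \<bullet> xu = 0" "z \<bullet> xv = 0" "z \<bullet> n = 0"
    and eq1: "w \<bullet> b = z \<bullet> a" and eq2: "w \<bullet> c = z \<bullet> b"
    and K: "\<And>\<xi>. norm \<xi> = 1 \<Longrightarrow> n \<bullet> \<xi> = 0 \<Longrightarrow> \<xi> \<bullet> xu = 0 \<Longrightarrow> \<xi> \<bullet> xv = 0 \<Longrightarrow>
        ((a \<bullet> n) * (c \<bullet> n) - (b \<bullet> n)^2 + (a \<bullet> \<xi>) * (c \<bullet> \<xi>) - (b \<bullet> \<xi>)^2)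
          / ((xu \<bullet> xu) * (xv \<bullet> xv) - (xu \<bullet> xv)^2) \<noteq> r^2"
    and an: "a \<bullet> n = r * (xu \<bullet> xu)" "b \<bullet> n = r * (xu \<bullet> xv)" "c \<bullet> n = r * (xv \<bullet> xv)"
  shows "w = 0 \<and> z = 0"
proof -
  define E where "E = xu \<bullet> xu"
  define F where "F = xu \<bullet> xv"
  define G where "G = xv \<bullet> xv"
  have egE: "E * G - F^2 \<noteq> 0" using eg unfolding E_def F_def G_def .
  have E0: "E \<noteq> 0"
  proof
    assume "E = 0"
    then have "xu = 0" unfolding E_def by simp
    then show False using egE unfolding E_def F_def by simp
  qed
  define t where "t = xv - (F / E) *\<^sub>R xu"
  have txu: "xu \<bullet> t = 0" unfolding t_def using E0
    by (simp add: inner_diff_right F_def E_def)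
  have t0: "t \<noteq> 0"
  proof
    assume "t = 0"
    then have xv: "xv = (F / E) *\<^sub>R xu" unfolding t_def by simp
    have "G = (F / E) * (F / E) * E" unfolding G_def by (simp add: xv E_def[symmetric] algebra_simps)
    moreover have "F = (F / E) * E" using E0 by simp
    ultimately have "E * G - F^2 = 0" using E0 by (simp add: power2_eq_square field_simps)
    then show False using egE by simp
  qed
  have xu0: "xu \<noteq> 0" using E0 unfolding E_def by auto
  have n0: "n \<noteq> 0" using n1 by auto
  have key: "R = 0" if x1: "norm \<xi> = 1" and x2: "n \<bullet> \<xi> = 0" and x3: "\<xi> \<bullet> xu = 0"
    and x4: "\<xi> \<bullet> xv = 0" and r1: "R \<bullet> xu = 0" and r2: "R \<bullet> xv = 0" and r3: "R \<bullet> n = 0"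
    and r4: "R \<bullet> \<xi> = 0" for \<xi> R
  proof (rule ccontr)
    assume R0: "R \<noteq> 0"
    have x0: "\<xi> \<noteq> 0" using x1 by auto
    show False
    proof (rule no_five[OF xu0 t0 n0 x0 R0])
      show "xu \<bullet> t = 0" by (rule txu)
      show "xu \<bullet> n = 0" using nxu by (simp add: inner_commute)
      show "xu \<bullet> \<xi> = 0" using x3 by (simp add: inner_commute)
      show "xu \<bullet> R = 0" using r1 by (simp add: inner_commute)
      have c: "xu \<bullet> n = 0" "xv \<bullet> n = 0" "xu \<bullet> \<xi> = 0" "xv \<bullet> \<xi> = 0" "xu \<bullet> R = 0" "xv \<bullet> R = 0"
        using nxu nxv x3 x4 r1 r2 by (simp_all add: inner_commute)
      show "t \<bullet> n = 0" unfolding t_def using c by (simp add: inner_diff_left)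
      show "t \<bullet> \<xi> = 0" unfolding t_def using c by (simp add: inner_diff_left)
      show "t \<bullet> R = 0" unfolding t_def using c by (simp add: inner_diff_left)
      show "n \<bullet> \<xi> = 0" by (rule x2)
      show "n \<bullet> R = 0" using r3 by (simp add: inner_commute)
      show "\<xi> \<bullet> R = 0" using r4 by (simp add: inner_commute)
    qed
  qed
  have Kr: "(a \<bullet> \<xi>) * (c \<bullet> \<xi>) \<noteq> (b \<bullet> \<xi>)^2" if "norm \<xi> = 1" "n \<bullet> \<xi> = 0" "\<xi> \<bullet> xu = 0"
    "\<xi> \<bullet> xv = 0" for \<xi>
  proof
    assume h: "(a \<bullet> \<xi>) * (c \<bullet> \<xi>) = (b \<bullet> \<xi>)^2"
    have "((a \<bullet> n) * (c \<bullet> n) - (b \<bullet> n)^2 + (a \<bullet> \<xi>) * (c \<bullet> \<xi>) - (b \<bullet> \<xi>)^2)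
          / ((xu \<bullet> xu) * (xv \<bullet> xv) - (xu \<bullet> xv)^2) = (r^2 * (E * G - F^2)) / (E * G - F^2)"
      unfolding an h E_def F_def G_def by (simp add: power2_eq_square algebra_simps)
    also have "\<dots> = r^2" using egE by simp
    finally show False using K[OF that] by simp
  qed
  have w0: "w = 0"
  proof (rule ccontr)
    assume w0: "w \<noteq> 0"
    define m where "m = norm w"
    have m0: "m \<noteq> 0" using w0 unfolding m_def by simp
    define \<xi> where "\<xi> = (1 / m) *\<^sub>R w"
    have xn: "norm \<xi> = 1" unfolding \<xi>_def m_def using w0 by simp
    have wx: "w = m *\<^sub>R \<xi>" unfolding \<xi>_def using m0 by simp
    have xo: "n \<bullet> \<xi> = 0" "\<xi> \<bullet> xu = 0" "\<xi> \<bullet> xv = 0"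
      unfolding \<xi>_def using wo by (simp_all add: inner_commute)
    define \<beta> where "\<beta> = z \<bullet> \<xi>"
    have "z - \<beta> *\<^sub>R \<xi> = 0"
    proof (rule key[OF xn xo])
      show "(z - \<beta> *\<^sub>R \<xi>) \<bullet> xu = 0" using zo xo by (simp add: inner_diff_left)
      show "(z - \<beta> *\<^sub>R \<xi>) \<bullet> xv = 0" using zo xo by (simp add: inner_diff_left)
      have "\<xi> \<bullet> n = 0" using xo by (simp add: inner_commute)
      then show "(z - \<beta> *\<^sub>R \<xi>) \<bullet> n = 0" using zo by (simp add: inner_diff_left)
      have "\<xi> \<bullet> \<xi> = 1" using xn by (simp add: norm_eq_1)
      then show "(z - \<beta> *\<^sub>R \<xi>) \<bullet> \<xi> = 0" unfolding \<beta>_def by (simp add: inner_diff_left)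
    qed
    then have zx: "z = \<beta> *\<^sub>R \<xi>" by simp
    have e1: "m * (b \<bullet> \<xi>) = \<beta> * (a \<bullet> \<xi>)" using eq1 unfolding wx zx by (simp add: inner_commute)
    have e2: "m * (c \<bullet> \<xi>) = \<beta> * (b \<bullet> \<xi>)" using eq2 unfolding wx zx by (simp add: inner_commute)
    have "m * ((a \<bullet> \<xi>) * (c \<bullet> \<xi>)) = (a \<bullet> \<xi>) * (m * (c \<bullet> \<xi>))" by simp
    also have "\<dots> = (b \<bullet> \<xi>) * (\<beta> * (a \<bullet> \<xi>))" unfolding e2 by simp
    also have "\<dots> = m * (b \<bullet> \<xi>)^2" unfolding e1[symmetric] by (simp add: power2_eq_square)
    finally have "(a \<bullet> \<xi>) * (c \<bullet> \<xi>) = (b \<bullet> \<xi>)^2" using m0 by simp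
    then show False using Kr[OF xn xo] by simp
  qed
  have z0: "z = 0"
  proof (rule ccontr)
    assume z0: "z \<noteq> 0"
    define m where "m = norm z"
    have m0: "m \<noteq> 0" using z0 unfolding m_def by simp
    define \<xi> where "\<xi> = (1 / m) *\<^sub>R z"
    have xn: "norm \<xi> = 1" unfolding \<xi>_def m_def using z0 by simp
    have zx: "z = m *\<^sub>R \<xi>" unfolding \<xi>_def using m0 by simp
    have xo: "n \<bullet> \<xi> = 0" "\<xi> \<bullet> xu = 0" "\<xi> \<bullet> xv = 0"
      unfolding \<xi>_def using zo by (simp_all add: inner_commute)
    have "a \<bullet> \<xi> = 0" using eq1 m0 unfolding w0 zx by (simp add: inner_commute)
    moreover have "b \<bullet> \<xi> = 0" using eq2 m0 unfolding w0 zx by (simp add: inner_commute)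
    ultimately show False using Kr[OF xn xo] by simp
  qed
  show ?thesis using w0 z0 by simp
qed

lemma eg_nonzero:
  fixes X :: "real^2 \<Rightarrow> real^4"
  assumes dX: "X differentiable (at y)" and inj: "inj (frechet_derivative X (at y))"
  shows "(pd X e_u y \<bullet> pd X e_u y) * (pd X e_v y \<bullet> pd X e_v y) - (pd X e_u y \<bullet> pd X e_v y)^2 \<noteq> 0"
proof
  define L where "L = frechet_derivative X (at y)"
  have lin: "linear L" using pd_linear[OF dX] unfolding L_def pd_def by simp
  have injL: "inj L" using inj unfolding L_def .
  define xu where "xu = L e_u"
  define xv where "xv = L e_v"
  have pu: "pd X e_u y = xu" "pd X e_v y = xv" unfolding xu_def xv_def L_def pd_def by simp_all
  define E where "E = xu \<bullet> xu"
  define F where "F = xu \<bullet> xv"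
  define G where "G = xv \<bullet> xv"
  assume "(pd X e_u y \<bullet> pd X e_u y) * (pd X e_v y \<bullet> pd X e_v y) - (pd X e_u y \<bullet> pd X e_v y)^2 = 0"
  then have eq: "E * G - F^2 = 0" unfolding pu E_def F_def G_def .
  have L0: "L 0 = 0" using lin by (simp add: linear_0)
  have c1: "e_u $ 1 = 1" "e_u $ 2 = 0" "e_v $ 1 = 0" "e_v $ 2 = 1"
    by (simp_all add: e_u_def e_v_def axis_def)
  show False
  proof (cases "E = 0")
    case True
    then have "L e_u = L 0" using L0 unfolding E_def xu_def by simp
    then have "e_u = 0" by (rule injD[OF injL])
    then show False using c1 by simp
  next
    case False
    define c where "c = F / E"
    define t where "t = xv - c *\<^sub>R xu"
    have "t \<bullet> t = G - 2 * c * F + c * c * E"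
      unfolding t_def E_def F_def G_def
      by (simp add: inner_diff_left inner_diff_right inner_commute[of xv xu] algebra_simps)
    also have "\<dots> = (E * G - F^2) / E" unfolding c_def using False
      by (simp add: field_simps power2_eq_square)
    finally have "t = 0" using eq by simp
    moreover have "t = L (e_v - c *\<^sub>R e_u)" unfolding t_def xu_def xv_def
      using lin by (simp add: linear_diff linear_cmul)
    ultimately have "L (e_v - c *\<^sub>R e_u) = L 0" using L0 by simp
    then have "e_v - c *\<^sub>R e_u = 0" by (rule injD[OF injL])
    then have "(e_v - c *\<^sub>R e_u) $ 2 = 0" by simp
    then show False using c1 by simp
  qed
qed

lemma local_W:
  fixes X N :: "real^2 \<Rightarrow> real^4" and r :: real
  assumes smX: "smooth_on U X" and smN: "smooth_on U N"
    and unit: "\<And>z. z \<in> U \<Longrightarrow> N z \<bullet> N z = 1"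
    and nu: "\<And>z. z \<in> U \<Longrightarrow> N z \<bullet> pd X e_u z = 0"
    and nv: "\<And>z. z \<in> U \<Longrightarrow> N z \<bullet> pd X e_v z = 0"
    and cE: "\<And>z. z \<in> U \<Longrightarrow> pd (pd X e_u) e_u z \<bullet> N z = r * (pd X e_u z \<bullet> pd X e_u z)"
    and cF: "\<And>z. z \<in> U \<Longrightarrow> pd (pd X e_u) e_v z \<bullet> N z = r * (pd X e_u z \<bullet> pd X e_v z)"
    and cG: "\<And>z. z \<in> U \<Longrightarrow> pd (pd X e_v) e_v z \<bullet> N z = r * (pd X e_v z \<bullet> pd X e_v z)"
    and eg: "(pd X e_u y \<bullet> pd X e_u y) * (pd X e_v y \<bullet> pd X e_v y) - (pd X e_u y \<bullet> pd X e_v y)^2 \<noteq> 0"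
    and K: "\<And>\<xi>. norm \<xi> = 1 \<Longrightarrow> N y \<bullet> \<xi> = 0 \<Longrightarrow> \<xi> \<bullet> pd X e_u y = 0 \<Longrightarrow> \<xi> \<bullet> pd X e_v y = 0 \<Longrightarrow>
        ((pd (pd X e_u) e_u y \<bullet> N y) * (pd (pd X e_v) e_v y \<bullet> N y) - (pd (pd X e_u) e_v y \<bullet> N y)^2
         + (pd (pd X e_u) e_u y \<bullet> \<xi>) * (pd (pd X e_v) e_v y \<bullet> \<xi>) - (pd (pd X e_u) e_v y \<bullet> \<xi>)^2)
          / ((pd X e_u y \<bullet> pd X e_u y) * (pd X e_v y \<bullet> pd X e_v y) - (pd X e_u y \<bullet> pd X e_v y)^2) \<noteq> r^2"
    and yU: "y \<in> U"
  shows "pd N e_u y + r *\<^sub>R pd X e_u y = 0 \<and> pd N e_v y + r *\<^sub>R pd X e_v y = 0"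
proof -
  have oU: "open U" using smooth_D(4)[OF smX yU] .
  note dX = smooth_D(1)[OF smX] and dN = smooth_D(1)[OF smN]
  note dX1 = smooth_D(2)[OF smX] and dN1 = smooth_D(2)[OF smN]
  have symX: "pd (pd X e_v) e_u z = pd (pd X e_u) e_v z" if "z \<in> U" for z
    using schwarz[OF smX that] by simp
  have symN: "pd (pd N e_v) e_u z = pd (pd N e_u) e_v z" if "z \<in> U" for z
    using schwarz[OF smN that] by simp
  have dNXu: "pd N w z \<bullet> pd X e_u z + N z \<bullet> pd (pd X e_u) w z = 0" if zU: "z \<in> U" for z w
  proof -
    have "pd (\<lambda>z. N z \<bullet> pd X e_u z) w z = 0" by (rule zero_pd[OF oU zU nu])
    then show ?thesis using pd_inner[OF dN[OF zU] dX1[OF zU, of e_u], of w] by simp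
  qed
  have dNXv: "pd N w z \<bullet> pd X e_v z + N z \<bullet> pd (pd X e_v) w z = 0" if zU: "z \<in> U" for z w
  proof -
    have "pd (\<lambda>z. N z \<bullet> pd X e_v z) w z = 0" by (rule zero_pd[OF oU zU nv])
    then show ?thesis using pd_inner[OF dN[OF zU] dX1[OF zU, of e_v], of w] by simp
  qed
  have dNN: "pd N w z \<bullet> N z = 0" if zU: "z \<in> U" for z w
  proof -
    have "pd (\<lambda>z. N z \<bullet> N z) w z = 0" by (rule zero_pd[OF oU zU unit])
    then have "pd N w z \<bullet> N z + N z \<bullet> pd N w z = 0" using pd_inner[OF dN[OF zU] dN[OF zU], of w] by simp
    then show ?thesis by (simp add: inner_commute)
  qed
  define W where "W = (\<lambda>z. pd N e_u z + r *\<^sub>R pd X e_u z)"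
  define Z where "Z = (\<lambda>z. pd N e_v z + r *\<^sub>R pd X e_v z)"
  have Wo: "W z \<bullet> pd X e_u z = 0" "W z \<bullet> pd X e_v z = 0" "W z \<bullet> N z = 0"
    and Zo: "Z z \<bullet> pd X e_u z = 0" "Z z \<bullet> pd X e_v z = 0" "Z z \<bullet> N z = 0"
    if zU: "z \<in> U" for z
  proof -
    have n1: "N z \<bullet> pd (pd X e_u) e_u z = r * (pd X e_u z \<bullet> pd X e_u z)"
      using cE[OF zU] by (simp add: inner_commute)
    have n2: "N z \<bullet> pd (pd X e_u) e_v z = r * (pd X e_u z \<bullet> pd X e_v z)"
      using cF[OF zU] by (simp add: inner_commute)
    have n3: "N z \<bullet> pd (pd X e_v) e_v z = r * (pd X e_v z \<bullet> pd X e_v z)"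
      using cG[OF zU] by (simp add: inner_commute)
    have n4: "N z \<bullet> pd (pd X e_v) e_u z = r * (pd X e_u z \<bullet> pd X e_v z)"
      using n2 symX[OF zU] by simp
    have m: "pd X e_u z \<bullet> N z = 0" "pd X e_v z \<bullet> N z = 0"
      using nu[OF zU] nv[OF zU] by (simp_all add: inner_commute)
    show "W z \<bullet> pd X e_u z = 0" unfolding W_def using dNXu[OF zU, of e_u] n1
      by (simp add: inner_add_left)
    show "W z \<bullet> pd X e_v z = 0" unfolding W_def using dNXv[OF zU, of e_u] n4
      by (simp add: inner_add_left inner_commute[of "pd X e_v z" "pd X e_u z"])
    show "W z \<bullet> N z = 0" unfolding W_def using dNN[OF zU, of e_u] m
      by (simp add: inner_add_left)
    show "Z z \<bullet> pd X e_u z = 0" unfolding Z_def using dNXu[OF zU, of e_v] n2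
      by (simp add: inner_add_left inner_commute[of "pd X e_v z" "pd X e_u z"])
    show "Z z \<bullet> pd X e_v z = 0" unfolding Z_def using dNXv[OF zU, of e_v] n3
      by (simp add: inner_add_left)
    show "Z z \<bullet> N z = 0" unfolding Z_def using dNN[OF zU, of e_v] m
      by (simp add: inner_add_left)
  qed
  have dW: "W differentiable (at y)" "pd W e_v y = pd (pd N e_u) e_v y + r *\<^sub>R pd (pd X e_u) e_v y"
    unfolding W_def using pd_add_scale[OF dN1[OF yU, of e_u] dX1[OF yU, of e_u]] by auto
  have dZ: "Z differentiable (at y)" "pd Z e_u y = pd (pd N e_v) e_u y + r *\<^sub>R pd (pd X e_v) e_u y"
    unfolding Z_def using pd_add_scale[OF dN1[OF yU, of e_v] dX1[OF yU, of e_v]] by auto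
  have WZ: "pd W e_v y = pd Z e_u y" using dW(2) dZ(2) symX[OF yU] symN[OF yU] by simp
  have s1: "pd W e_v y \<bullet> pd X e_u y + W y \<bullet> pd (pd X e_u) e_v y = 0"
  proof -
    have "pd (\<lambda>z. W z \<bullet> pd X e_u z) e_v y = 0" by (rule zero_pd[OF oU yU]) (rule Wo)
    then show ?thesis using pd_inner[OF dW(1) dX1[OF yU, of e_u], of e_v] by simp
  qed
  have s2: "pd Z e_u y \<bullet> pd X e_u y + Z y \<bullet> pd (pd X e_u) e_u y = 0"
  proof -
    have "pd (\<lambda>z. Z z \<bullet> pd X e_u z) e_u y = 0" by (rule zero_pd[OF oU yU]) (rule Zo)
    then show ?thesis using pd_inner[OF dZ(1) dX1[OF yU, of e_u], of e_u] by simp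
  qed
  have s3: "pd W e_v y \<bullet> pd X e_v y + W y \<bullet> pd (pd X e_v) e_v y = 0"
  proof -
    have "pd (\<lambda>z. W z \<bullet> pd X e_v z) e_v y = 0" by (rule zero_pd[OF oU yU]) (rule Wo)
    then show ?thesis using pd_inner[OF dW(1) dX1[OF yU, of e_v], of e_v] by simp
  qed
  have s4: "pd Z e_u y \<bullet> pd X e_v y + Z y \<bullet> pd (pd X e_v) e_u y = 0"
  proof -
    have "pd (\<lambda>z. Z z \<bullet> pd X e_v z) e_u y = 0" by (rule zero_pd[OF oU yU]) (rule Zo)
    then show ?thesis using pd_inner[OF dZ(1) dX1[OF yU, of e_v], of e_u] by simp
  qed
  have eq1: "W y \<bullet> pd (pd X e_u) e_v y = Z y \<bullet> pd (pd X e_u) e_u y"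
    using s1 s2 WZ by simp
  have eq2: "W y \<bullet> pd (pd X e_v) e_v y = Z y \<bullet> pd (pd X e_u) e_v y"
    using s3 s4 WZ symX[OF yU] by simp
  have "W y = 0 \<and> Z y = 0"
  proof (rule alg[OF eg unit[OF yU] nu[OF yU] nv[OF yU] Wo[OF yU] Zo[OF yU] eq1 eq2])
    fix \<xi> :: "real^4"
    assume "norm \<xi> = 1" "N y \<bullet> \<xi> = 0" "\<xi> \<bullet> pd X e_u y = 0" "\<xi> \<bullet> pd X e_v y = 0"
    then show "((pd (pd X e_u) e_u y \<bullet> N y) * (pd (pd X e_v) e_v y \<bullet> N y) - (pd (pd X e_u) e_v y \<bullet> N y)^2
         + (pd (pd X e_u) e_u y \<bullet> \<xi>) * (pd (pd X e_v) e_v y \<bullet> \<xi>) - (pd (pd X e_u) e_v y \<bullet> \<xi>)^2)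
          / ((pd X e_u y \<bullet> pd X e_u y) * (pd X e_v y \<bullet> pd X e_v y) - (pd X e_u y \<bullet> pd X e_v y)^2) \<noteq> r^2"
      by (rule K)
  qed (use cE[OF yU] cF[OF yU] cG[OF yU] in auto)
  then show ?thesis unfolding W_def Z_def by simp
qed

lemma vec2_decomp: "(h::real^2) = (h $ 1) *\<^sub>R e_u + (h $ 2) *\<^sub>R e_v"
  by (simp add: vec_eq_iff forall_2 e_u_def e_v_def axis_def)

lemma chart_zero:
  fixes X N :: "real^2 \<Rightarrow> real^4" and r :: real
  assumes r0: "r > 0" and dX: "X differentiable (at x)" and dN: "N differentiable (at x)"
    and W: "pd N e_u x + r *\<^sub>R pd X e_u x = 0 \<and> pd N e_v x + r *\<^sub>R pd X e_v x = 0"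
  shows "((\<lambda>z. X z + (1 / r) *\<^sub>R N z) has_derivative (\<lambda>h. 0)) (at x)"
proof -
  have d: "((\<lambda>z. X z + (1 / r) *\<^sub>R N z) has_derivative (\<lambda>h. pd X h x + (1 / r) *\<^sub>R pd N h x)) (at x)"
    by (intro has_derivative_add has_derivative_scaleR_right pd_has dX dN)
  have lX: "linear (\<lambda>h. pd X h x)" and lN: "linear (\<lambda>h. pd N h x)"
    using pd_linear[OF dX] pd_linear[OF dN] .
  have Nu: "pd N e_u x = - r *\<^sub>R pd X e_u x" and Nv: "pd N e_v x = - r *\<^sub>R pd X e_v x"
    using W by (simp_all add: eq_neg_iff_add_eq_0)
  have "pd X h x + (1 / r) *\<^sub>R pd N h x = 0" for h
  proof -
    have a: "pd X h x = (h $ 1) *\<^sub>R pd X e_u x + (h $ 2) *\<^sub>R pd X e_v x"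
      by (subst vec2_decomp[of h]) (simp add: linear_add[OF lX] linear_cmul[OF lX])
    have b: "pd N h x = (h $ 1) *\<^sub>R pd N e_u x + (h $ 2) *\<^sub>R pd N e_v x"
      by (subst vec2_decomp[of h]) (simp add: linear_add[OF lN] linear_cmul[OF lN])
    have c: "pd N h x = (- r) *\<^sub>R pd X h x"
      unfolding a b Nu Nv by (simp add: scaleR_add_right mult.commute)
    have rr: "(1 / r) * (- r) = -1" using r0 by simp
    show ?thesis unfolding c using r0 by (simp add: rr)
  qed
  then show ?thesis using d by simp
qed

theorem theorem3p2:
  fixes A :: "('m::{t2_space, second_countable_topology} set \<times> ('m \<Rightarrow> real^2)) set"
    and \<alpha> \<nu> :: "'m \<Rightarrow> real^4"
    and r :: real
  assumes "connected (UNIV :: 'm set)"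
    and "oriented_smooth_atlas A"
    and "smooth_immersion A \<alpha>"
    and "orth_asymptotic_lines A \<alpha>"
    and "r > 0"
    and "unit_normal_field A \<alpha> \<nu>"
    and "constant_projection A \<alpha> \<nu> r"
    and "\<forall>c\<in>A. \<forall>x\<in>cdom c. \<forall>n1 n2. normal_frame (\<alpha> \<circ> param c) x n1 n2 \<longrightarrow>
           gauss_curv (\<alpha> \<circ> param c) n1 n2 x \<noteq> r^2"
  shows "\<exists>c0 :: real^4. range \<alpha> \<subseteq> sphere c0 (1 / r)"
proof -
  note conn = assms(1) and atlas = assms(2) and imm = assms(3) and r0 = assms(5)
    and unf = assms(6) and cp = assms(7) and KK = assms(8)
  define g where "g p = \<alpha> p + (1 / r) *\<^sub>R \<nu> p" for p
  have loc: "((\<lambda>z. (\<alpha> \<circ> param c) z + (1 / r) *\<^sub>R (\<nu> \<circ> param c) z) has_derivative (\<lambda>h. 0)) (at x)"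
    if cA: "c \<in> A" and xU: "x \<in> cdom c" for c x
  proof -
    define X where "X = \<alpha> \<circ> param c"
    define N where "N = \<nu> \<circ> param c"
    have im1: "smooth_on (cdom c) (\<alpha> \<circ> param c) \<and> (\<forall>x\<in>cdom c. inj (frechet_derivative (\<alpha> \<circ> param c) (at x)))"
      using imm cA unfolding smooth_immersion_def by (rule bspec)
    have smX: "smooth_on (cdom c) X" using im1 unfolding X_def by (rule conjunct1)
    have injX: "\<And>z. z \<in> cdom c \<Longrightarrow> inj (frechet_derivative X (at z))"
      using im1 unfolding X_def by blast
    have smN: "smooth_on (cdom c) N" using unf cA unfolding unit_normal_field_def N_def by blast
    have nN: "\<And>p. norm (\<nu> p) = 1" using unf unfolding unit_normal_field_def by blast
    have unit: "N z \<bullet> N z = 1" for z using nN[of "param c z"] unfolding N_def by (simp add: norm_eq_1)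
    have un1: "smooth_on (cdom c) (\<nu> \<circ> param c) \<and>
        (\<forall>x\<in>cdom c. \<nu> (param c x) \<bullet> Xu (\<alpha> \<circ> param c) x = 0 \<and> \<nu> (param c x) \<bullet> Xv (\<alpha> \<circ> param c) x = 0)"
      using unf cA unfolding unit_normal_field_def by blast
    have nuv: "N z \<bullet> pd X e_u z = 0" "N z \<bullet> pd X e_v z = 0" if "z \<in> cdom c" for z
      using un1 that unfolding N_def X_def pd_X by simp_all
    have sff: "second_ff X (N z) z du dv = r * first_ff X z du dv" if "z \<in> cdom c" for z du dv
      using cp cA that unfolding constant_projection_def N_def X_def by simp
    have cE: "pd (pd X e_u) e_u z \<bullet> N z = r * (pd X e_u z \<bullet> pd X e_u z)"
      and cG: "pd (pd X e_v) e_v z \<bullet> N z = r * (pd X e_v z \<bullet> pd X e_v z)"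
      and cF: "pd (pd X e_u) e_v z \<bullet> N z = r * (pd X e_u z \<bullet> pd X e_v z)"
      if zU: "z \<in> cdom c" for z
    proof -
      have s1: "second_ff X (N z) z 1 0 = r * first_ff X z 1 0" by (rule sff[OF zU])
      have s2: "second_ff X (N z) z 0 1 = r * first_ff X z 0 1" by (rule sff[OF zU])
      have s3: "second_ff X (N z) z 1 1 = r * first_ff X z 1 1" by (rule sff[OF zU])
      show e: "pd (pd X e_u) e_u z \<bullet> N z = r * (pd X e_u z \<bullet> pd X e_u z)"
        using s1 by (simp add: second_ff_def first_ff_def ee_def ff_def gg_def EE_def FF_def GG_def pd_X)
      show g: "pd (pd X e_v) e_v z \<bullet> N z = r * (pd X e_v z \<bullet> pd X e_v z)"
        using s2 by (simp add: second_ff_def first_ff_def ee_def ff_def gg_def EE_def FF_def GG_def pd_X)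
      show "pd (pd X e_u) e_v z \<bullet> N z = r * (pd X e_u z \<bullet> pd X e_v z)"
        using s3 e g by (simp add: second_ff_def first_ff_def ee_def ff_def gg_def EE_def FF_def GG_def pd_X algebra_simps)
    qed
    have dX: "X differentiable (at x)" and dN: "N differentiable (at x)"
      using smooth_D(1)[OF smX xU] smooth_D(1)[OF smN xU] .
    have eg: "(pd X e_u x \<bullet> pd X e_u x) * (pd X e_v x \<bullet> pd X e_v x) - (pd X e_u x \<bullet> pd X e_v x)^2 \<noteq> 0"
      by (rule eg_nonzero[OF dX injX[OF xU]])
    have W: "pd N e_u x + r *\<^sub>R pd X e_u x = 0 \<and> pd N e_v x + r *\<^sub>R pd X e_v x = 0"
    proof (rule local_W[OF smX smN unit nuv cE cF cG eg _ xU])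
      fix \<xi> :: "real^4"
      assume h: "norm \<xi> = 1" "N x \<bullet> \<xi> = 0" "\<xi> \<bullet> pd X e_u x = 0" "\<xi> \<bullet> pd X e_v x = 0"
      have nf: "normal_frame X x (N x) \<xi>"
        unfolding normal_frame_def pd_X using h nN[of "param c x"] nuv[OF xU]
        by (simp add: N_def inner_commute)
      have "normal_frame X x (N x) \<xi> \<longrightarrow> gauss_curv X (N x) \<xi> x \<noteq> r^2"
        using KK cA xU unfolding X_def by blast
      then have "gauss_curv X (N x) \<xi> x \<noteq> r^2" using nf by blast
      then show "((pd (pd X e_u) e_u x \<bullet> N x) * (pd (pd X e_v) e_v x \<bullet> N x) - (pd (pd X e_u) e_v x \<bullet> N x)^2
         + (pd (pd X e_u) e_u x \<bullet> \<xi>) * (pd (pd X e_v) e_v x \<bullet> \<xi>) - (pd (pd X e_u) e_v x \<bullet> \<xi>)^2)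
          / ((pd X e_u x \<bullet> pd X e_u x) * (pd X e_v x \<bullet> pd X e_v x) - (pd X e_u x \<bullet> pd X e_v x)^2) \<noteq> r^2"
        by (simp add: gauss_curv_def ee_def ff_def gg_def EE_def FF_def GG_def pd_X)
    qed
    show ?thesis using chart_zero[OF r0 dX dN W] unfolding X_def N_def .
  qed
  have lc: "\<exists>V. open V \<and> p \<in> V \<and> (\<forall>q\<in>V. g q = g p)" for p
  proof -
    have "(\<Union>c\<in>A. fst c) = UNIV" using atlas unfolding oriented_smooth_atlas_def by (rule conjunct1)
    then have "p \<in> (\<Union>c\<in>A. fst c)" by simp
    then obtain c where cA: "c \<in> A" and pc: "p \<in> fst c" by blast
    have at2: "\<forall>c\<in>A. open (fst c) \<and> open (cdom c) \<and> homeomorphism (fst c) (cdom c) (snd c) (param c)"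
      using atlas unfolding oriented_smooth_atlas_def by (rule conjunct1[OF conjunct2])
    have at3: "open (fst c) \<and> open (cdom c) \<and> homeomorphism (fst c) (cdom c) (snd c) (param c)"
      using at2 cA by (rule bspec)
    have oc: "open (fst c)" "open (cdom c)" and hom: "homeomorphism (fst c) (cdom c) (snd c) (param c)"
      using at3 by simp_all
    have xU: "snd c p \<in> cdom c" using pc unfolding cdom_def by blast
    obtain \<delta> where d0: "\<delta> > 0" and dB: "ball (snd c p) \<delta> \<subseteq> cdom c"
      using oc(2) xU open_contains_ball by blast
    obtain k where k: "\<forall>z\<in>ball (snd c p) \<delta>. (\<alpha> \<circ> param c) z + (1 / r) *\<^sub>R (\<nu> \<circ> param c) z = k"
    proof -
      have "\<exists>k. \<forall>z\<in>ball (snd c p) \<delta>. (\<alpha> \<circ> param c) z + (1 / r) *\<^sub>R (\<nu> \<circ> param c) z = k"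
      proof (rule has_derivative_zero_constant)
        show "convex (ball (snd c p) \<delta>)" by simp
        fix z assume "z \<in> ball (snd c p) \<delta>"
        then have "z \<in> cdom c" using dB by blast
        show "((\<lambda>z. (\<alpha> \<circ> param c) z + (1 / r) *\<^sub>R (\<nu> \<circ> param c) z) has_derivative (\<lambda>h. 0))
            (at z within ball (snd c p) \<delta>)"
          by (rule has_derivative_at_withinI[OF loc[OF cA \<open>z \<in> cdom c\<close>]])
      qed
      then show ?thesis using that by blast
    qed
    have inv: "\<And>q. q \<in> fst c \<Longrightarrow> param c (snd c q) = q" and cont: "continuous_on (fst c) (snd c)"
      using hom unfolding homeomorphism_def by simp_all
    define V where "V = snd c -` ball (snd c p) \<delta> \<inter> fst c"
    have "open V" unfolding V_def using cont oc(1) continuous_on_open_vimage by blast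
    moreover have "p \<in> V" unfolding V_def using pc d0 by simp
    moreover have "g q = k" if "q \<in> V" for q
    proof -
      have "q \<in> fst c" "snd c q \<in> ball (snd c p) \<delta>" using that unfolding V_def by auto
      then have "g q = (\<alpha> \<circ> param c) (snd c q) + (1 / r) *\<^sub>R (\<nu> \<circ> param c) (snd c q)"
        using inv by (simp add: g_def)
      then show ?thesis using k \<open>snd c q \<in> ball (snd c p) \<delta>\<close> by simp
    qed
    ultimately show ?thesis by (intro exI[of _ V]) auto
  qed
  define p0 :: 'm where "p0 = undefined"
  define S1 where "S1 = {q. g q = g p0}"
  define S2 where "S2 = {q. g q \<noteq> g p0}"
  have oS1: "open S1" unfolding open_subopen[of S1]
  proof
    fix q assume qS: "q \<in> S1"
    obtain V where V: "open V" "q \<in> V" "\<forall>q'\<in>V. g q' = g q" using lc by blast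
    have "V \<subseteq> S1" using V(3) qS unfolding S1_def by auto
    then show "\<exists>T. open T \<and> q \<in> T \<and> T \<subseteq> S1" using V(1,2) by blast
  qed
  have oS2: "open S2" unfolding open_subopen[of S2]
  proof
    fix q assume qS: "q \<in> S2"
    obtain V where V: "open V" "q \<in> V" "\<forall>q'\<in>V. g q' = g q" using lc by blast
    have "V \<subseteq> S2" using V(3) qS unfolding S2_def by auto
    then show "\<exists>T. open T \<and> q \<in> T \<and> T \<subseteq> S2" using V(1,2) by blast
  qed
  have i1: "S1 \<inter> S2 \<inter> UNIV = {}" unfolding S1_def S2_def by auto
  have i2: "UNIV \<subseteq> S1 \<union> S2" unfolding S1_def S2_def by auto
  have disj: "S1 \<inter> UNIV = {} \<or> S2 \<inter> UNIV = {}" by (rule connectedD[OF conn oS1 oS2 i1 i2])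
  have p0S: "p0 \<in> S1" unfolding S1_def by simp
  have S2e: "S2 = {}" using disj p0S by auto
  have all: "g q = g p0" for q
  proof (rule ccontr)
    assume "g q \<noteq> g p0"
    then have "q \<in> S2" unfolding S2_def by simp
    then show False using S2e by simp
  qed
  have nN: "\<And>p. norm (\<nu> p) = 1" using unf unfolding unit_normal_field_def by blast
  have "range \<alpha> \<subseteq> sphere (g p0) (1 / r)"
  proof
    fix y assume "y \<in> range \<alpha>"
    then obtain q where q: "y = \<alpha> q" by blast
    have "dist (g p0) y = dist (g q) (\<alpha> q)" using all[of q] q by simp
    also have "\<dots> = norm ((1 / r) *\<^sub>R \<nu> q)" by (simp add: g_def dist_norm)
    also have "\<dots> = 1 / r" using nN[of q] r0 by simp
    finally show "y \<in> sphere (g p0) (1 / r)" by simp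
  qed
  then show ?thesis by blast
qed

end
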